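(* Given index sets $\hat{\mathcal{R}}\subseteq\mathcal{R}$ and $\hat{\mathcal{L}}\subseteq\mathcal{L}$, we have: 1. $[\theta^*(C)]_{\hat{\mathcal{R}}}=\alpha$ and $[\theta^*(C)]_{\hat{\mathcal{L}}}=\beta$. 2. Let $\hat{\mathcal{S}}=\hat{\mathcal{R}}\cup\hat{\mathcal{L}}$, $|\hat{\mathcal{S}}^{\rm c}|$ be the cardinality of $\hat{\mathcal{S}}^{\rm c}$, $\hat{\mathbf{G}}_{11}=[\mathbf{Z}^T]_{\hat{\mathcal{S}}^{\rm c}}^T[\mathbf{Z}^T]_{\hat{\mathcal{S}}^{\rm c}}$, $\hat{\mathbf{G}}_{12}=[\mathbf{Z}^T]_{\hat{\mathcal{S}}^{\rm c}}^T[\mathbf{Z}^T]_{\hat{\mathcal{S}}}$ and $\hat{\mathbf{y}}=[\bar{\mathbf{y}}]_{\hat{\mathcal{S}}^{\rm c}}-C\hat{\mathbf{G}}_{12}[\theta^*(C)]_{\hat{\mathcal{S}}}$. Then $[\theta^*(C)]_{\hat{\mathcal{S}}^{\rm c}}$ can be computed by solving $$\min_{\hat{\theta}\in\mathbb{R}^{|\hat{\mathcal{S}}^{\rm c}|}}\ \frac{C}{2}\hat{\theta}^T\hat{\mathbf{G}}_{11}\hat{\theta}-\hat{\mathbf{y}}^T\hat{\theta}\quad \text{s.t. } \hat{\theta}\in[\alpha,\beta]^{|\hat{\mathcal{S}}^{\rm c}|}.$$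
   Context: Observations $\{\mathbf{x}_i,y_i\}_{i=1}^l$ with $\mathbf{x}_i\in\mathbb{R}^n$, $y_i\in\mathbb{R}$, and scalars $a_i,b_i$. Consider the primal problem $\min_{\mathbf{w}\in\mathbb{R}^n}\frac12\|\mathbf{w}\|^2+C\sum_{i=1}^l\varphi(\mathbf{w}^T(a_i\mathbf{x}_i)+b_iy_i)$ with $C>0$, where $\varphi:\mathbb{R}\to\mathbb{R}_+$ is a nonconstant continuous sublinear (convex and positively homogeneous) function; its conjugate $\varphi^*$ is the indicator function of a closed interval $[\alpha,\beta]$ with $\alpha<\beta$. Let $\mathbf{Z}=(a_1\mathbf{x}_1,\ldots,a_l\mathbf{x}_l)^T$ and $\bar{\mathbf{y}}=(b_1y_1,\ldots,b_ly_l)^T$. The dual problem is $\min_{\theta\in[\alpha,\beta]^l}\frac{C}{2}\|\mathbf{Z}^T\theta\|^2-\langle\bar{\mathbf{y}},\theta\rangle$. Let $\mathbf{w}^*(C)$ and $\theta^*(C)$ be the primal and dual optimal solutions, related by $\mathbf{w}^*(C)=-C\mathbf{Z}^T\theta^*(C)$. Define $\mathcal{R}=\{i:-\langle\mathbf{w}^*(C),a_i\mathbf{x}_i\rangle>b_iy_i\}$ and $\mathcal{L}=\{i:-\langle\mathbf{w}^*(C),a_i\mathbf{x}_i\rangle<b_iy_i\}$ (indices of non-support vectors). Notation: $\mathcal{I}=\{1,\ldots,l\}$; for $\mathcal{J}\subseteq\mathcal{I}$, $\mathcal{J}^{\rm c}=\mathcal{I}\setminus\mathcal{J}$, $[\mathbf{x}]_{\mathcal{J}}$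 is the subvector of $\mathbf{x}$ indexed by $\mathcal{J}$ and $[\mathbf{M}]_{\mathcal{J}}$ is the submatrix of columns of $\mathbf{M}$ indexed by $\mathcal{J}$. *)

theory Defs
  imports "HOL-Analysis.Analysis"
begin

text \<open>Observations are indexed by the index set I = {1..l}; vectors in R^l (resp. R^J)
  are represented as functions nat => real, only their values on I (resp. J) matter.\<close>

definition conjugate :: "(real \<Rightarrow> real) \<Rightarrow> real \<Rightarrow> ereal" where
  "conjugate \<phi> s = (SUP t. ereal (s * t - \<phi> t))"

definition sublinear :: "(real \<Rightarrow> real) \<Rightarrow> bool" where
  "sublinear \<phi> \<longleftrightarrow> convex_on UNIV \<phi> \<and> (\<forall>t>0. \<forall>s. \<phi> (t * s) = t * \<phi> s)"

definition idx :: "nat \<Rightarrow> nat set" where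
  "idx l = {1..l}"

definition zrow :: "(nat \<Rightarrow> real) \<Rightarrow> (nat \<Rightarrow> real^'n) \<Rightarrow> nat \<Rightarrow> real^'n" where
  "zrow a x i = a i *\<^sub>R x i"

definition ZT :: "nat \<Rightarrow> (nat \<Rightarrow> real) \<Rightarrow> (nat \<Rightarrow> real^'n) \<Rightarrow> (nat \<Rightarrow> real) \<Rightarrow> real^'n" where
  "ZT l a x \<theta> = (\<Sum>i\<in>idx l. \<theta> i *\<^sub>R zrow a x i)"

definition ybar :: "(nat \<Rightarrow> real) \<Rightarrow> (nat \<Rightarrow> real) \<Rightarrow> nat \<Rightarrow> real" where
  "ybar b y i = b i * y i"

definition primal_obj :: "real \<Rightarrow> (real \<Rightarrow> real) \<Rightarrow> nat \<Rightarrow> (nat \<Rightarrow> real) \<Rightarrow> (nat \<Rightarrow> real^'n)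
    \<Rightarrow> (nat \<Rightarrow> real) \<Rightarrow> (nat \<Rightarrow> real) \<Rightarrow> real^'n \<Rightarrow> real" where
  "primal_obj C \<phi> l a x b y w =
     1/2 * (norm w)^2 + C * (\<Sum>i\<in>idx l. \<phi> (w \<bullet> zrow a x i + ybar b y i))"

definition dual_obj :: "real \<Rightarrow> nat \<Rightarrow> (nat \<Rightarrow> real) \<Rightarrow> (nat \<Rightarrow> real^'n)
    \<Rightarrow> (nat \<Rightarrow> real) \<Rightarrow> (nat \<Rightarrow> real) \<Rightarrow> (nat \<Rightarrow> real) \<Rightarrow> real" where
  "dual_obj C l a x b y \<theta> =
     C/2 * (norm (ZT l a x \<theta>))^2 - (\<Sum>i\<in>idx l. ybar b y i * \<theta> i)"

definition in_box :: "real \<Rightarrow> real \<Rightarrow> nat set \<Rightarrow> (nat \<Rightarrow> real) \<Rightarrow> bool" where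
  "in_box \<alpha> \<beta> J \<theta> \<longleftrightarrow> (\<forall>i\<in>J. \<alpha> \<le> \<theta> i \<and> \<theta> i \<le> \<beta>)"

definition Rset :: "nat \<Rightarrow> (nat \<Rightarrow> real) \<Rightarrow> (nat \<Rightarrow> real^'n) \<Rightarrow> (nat \<Rightarrow> real) \<Rightarrow> (nat \<Rightarrow> real)
    \<Rightarrow> real^'n \<Rightarrow> nat set" where
  "Rset l a x b y w = {i\<in>idx l. - (w \<bullet> zrow a x i) > ybar b y i}"

definition Lset :: "nat \<Rightarrow> (nat \<Rightarrow> real) \<Rightarrow> (nat \<Rightarrow> real^'n) \<Rightarrow> (nat \<Rightarrow> real) \<Rightarrow> (nat \<Rightarrow> real)
    \<Rightarrow> real^'n \<Rightarrow> nat set" where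
  "Lset l a x b y w = {i\<in>idx l. - (w \<bullet> zrow a x i) < ybar b y i}"

text \<open>Entries of G11 = [Z^T]_{Sc}^T [Z^T]_{Sc} and G12 = [Z^T]_{Sc}^T [Z^T]_S are the
  inner products (z i) . (z j) for i in Sc and j in Sc resp. j in S.\<close>
definition G :: "(nat \<Rightarrow> real) \<Rightarrow> (nat \<Rightarrow> real^'n) \<Rightarrow> nat \<Rightarrow> nat \<Rightarrow> real" where
  "G a x i j = zrow a x i \<bullet> zrow a x j"

definition yhat :: "real \<Rightarrow> nat \<Rightarrow> (nat \<Rightarrow> real) \<Rightarrow> (nat \<Rightarrow> real^'n) \<Rightarrow> (nat \<Rightarrow> real) \<Rightarrow> (nat \<Rightarrow> real)
    \<Rightarrow> nat set \<Rightarrow> (nat \<Rightarrow> real) \<Rightarrow> nat \<Rightarrow> real" where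
  "yhat C l a x b y S \<theta> i = ybar b y i - C * (\<Sum>j\<in>S. G a x i j * \<theta> j)"

definition reduced_obj :: "real \<Rightarrow> nat \<Rightarrow> (nat \<Rightarrow> real) \<Rightarrow> (nat \<Rightarrow> real^'n) \<Rightarrow> (nat \<Rightarrow> real)
    \<Rightarrow> (nat \<Rightarrow> real) \<Rightarrow> nat set \<Rightarrow> (nat \<Rightarrow> real) \<Rightarrow> (nat \<Rightarrow> real) \<Rightarrow> real" where
  "reduced_obj C l a x b y S \<theta>S th =
     C/2 * (\<Sum>i\<in>idx l - S. \<Sum>j\<in>idx l - S. th i * G a x i j * th j)
     - (\<Sum>i\<in>idx l - S. yhat C l a x b y S \<theta>S i * th i)"

end

theory Submission
  imports Defs
begin


lemma small_t:
  fixes h c q d :: real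
  assumes "c \<ge> 0" "q \<ge> 0" "d > 0"
    and H: "\<And>t. 0 < t \<Longrightarrow> t \<le> d \<Longrightarrow> 0 \<le> - t * h + c * t\<^sup>2 * q"
  shows "h \<le> 0"
proof (rule ccontr)
  assume "\<not> h \<le> 0" hence hp: "h > 0" by simp
  define t where "t = min d (h / (c*q+1))"
  have cq: "c*q \<ge> 0" using assms by simp
  have "c*q+1 > 0" using cq by simp
  hence "h/(c*q+1) > 0" using hp by simp
  hence tp: "t > 0" using assms by (simp add: t_def)
  have tle: "t \<le> h/(c*q+1)" by (simp add: t_def)
  hence "t*(c*q+1) \<le> h" using cq by (simp add: pos_le_divide_eq)
  hence "c*q*t < h" using tp by (simp add: algebra_simps)
  hence "t*(c*q*t) < t*h" using tp by simp
  moreover have "0 \<le> - t * h + c * t\<^sup>2 * q" using H[OF tp] by (simp add: t_def)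
  ultimately show False by (simp add: power2_eq_square algebra_simps)
qed

lemma ZT_upd:
  assumes "i \<in> idx l"
  shows "ZT l a x (f(i := f i + s)) = ZT l a x f + s *\<^sub>R zrow a x i"
proof -
  have fin: "finite (idx l)" by (simp add: idx_def)
  have "ZT l a x (f(i := f i + s)) = (\<Sum>j\<in>idx l. f j *\<^sub>R zrow a x j + (if j = i then s *\<^sub>R zrow a x i else 0))"
    unfolding ZT_def by (rule sum.cong) (auto simp: scaleR_add_left)
  also have "\<dots> = ZT l a x f + s *\<^sub>R zrow a x i"
    using assms fin by (simp add: sum.distrib ZT_def)
  finally show ?thesis .
qed

lemma dual_upd:
  assumes "i \<in> idx l"
  shows "dual_obj C l a x b y (f(i := f i + s)) = dual_obj C l a x b y f
     + s * (C * (ZT l a x f \<bullet> zrow a x i) - ybar b y i) + C/2 * s\<^sup>2 * (norm (zrow a x i))\<^sup>2"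
proof -
  have fin: "finite (idx l)" by (simp add: idx_def)
  have s1: "(\<Sum>j\<in>idx l. ybar b y j * (f(i := f i + s)) j) = (\<Sum>j\<in>idx l. ybar b y j * f j) + ybar b y i * s"
  proof -
    have "(\<Sum>j\<in>idx l. ybar b y j * (f(i := f i + s)) j) = (\<Sum>j\<in>idx l. ybar b y j * f j + (if j = i then ybar b y i * s else 0))"
      by (rule sum.cong) (auto simp: algebra_simps)
    thus ?thesis using assms fin by (simp add: sum.distrib)
  qed
  have n: "(norm (ZT l a x f + s *\<^sub>R zrow a x i))\<^sup>2 = (norm (ZT l a x f))\<^sup>2 + 2 * s * (ZT l a x f \<bullet> zrow a x i) + s\<^sup>2 * (norm (zrow a x i))\<^sup>2"
    unfolding power2_norm_eq_inner by (simp add: inner_add_left inner_add_right inner_commute algebra_simps power2_eq_square)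
  show ?thesis unfolding dual_obj_def ZT_upd[OF assms] s1 n
    by (simp add: algebra_simps)
qed


lemma norm_ZT_sq:
  "(norm (ZT l a x f))\<^sup>2 = (\<Sum>i\<in>idx l. \<Sum>j\<in>idx l. f i * G a x i j * f j)"
  unfolding power2_norm_eq_inner ZT_def G_def
  by (simp add: inner_sum_left inner_sum_right sum_distrib_left inner_commute algebra_simps)

lemma dual_split:
  assumes S: "S \<subseteq> idx l"
  shows "dual_obj C l a x b y f = reduced_obj C l a x b y S f f
     + (C/2 * (\<Sum>i\<in>S. \<Sum>j\<in>S. f i * G a x i j * f j) - (\<Sum>i\<in>S. ybar b y i * f i))"
proof -
  have fin: "finite (idx l)" by (simp add: idx_def)
  have finS: "finite S" using S fin finite_subset by blast
  let ?Sc = "idx l - S"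
  let ?g = "\<lambda>i j. f i * G a x i j * f j"
  have sp: "\<And>h :: nat \<Rightarrow> real. sum h (idx l) = sum h ?Sc + sum h S"
    using sum.subset_diff[OF S fin] .
  have P: "(\<Sum>i\<in>idx l. \<Sum>j\<in>idx l. ?g i j) =
     (\<Sum>i\<in>?Sc. \<Sum>j\<in>?Sc. ?g i j) + (\<Sum>i\<in>?Sc. \<Sum>j\<in>S. ?g i j)
     + (\<Sum>i\<in>S. \<Sum>j\<in>?Sc. ?g i j) + (\<Sum>i\<in>S. \<Sum>j\<in>S. ?g i j)"
    by (simp add: sp sum.distrib)
  have sym: "(\<Sum>i\<in>S. \<Sum>j\<in>?Sc. ?g i j) = (\<Sum>i\<in>?Sc. \<Sum>j\<in>S. ?g i j)"
    by (subst sum.swap) (simp add: G_def inner_commute mult.commute mult.left_commute)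
  have y: "(\<Sum>i\<in>idx l. ybar b y i * f i) = (\<Sum>i\<in>?Sc. ybar b y i * f i) + (\<Sum>i\<in>S. ybar b y i * f i)"
    by (rule sp)
  have r: "(\<Sum>i\<in>?Sc. yhat C l a x b y S f i * f i) = (\<Sum>i\<in>?Sc. ybar b y i * f i) - C * (\<Sum>i\<in>?Sc. \<Sum>j\<in>S. ?g i j)"
    unfolding yhat_def
    by (simp add: algebra_simps sum_subtractf sum_distrib_left sum_distrib_right)
  show ?thesis
    unfolding dual_obj_def reduced_obj_def norm_ZT_sq P sym y r
    by (simp add: algebra_simps)
qed

lemma box_side:
  assumes opt: "\<forall>\<theta>. in_box \<alpha> \<beta> (idx l) \<theta> \<longrightarrow> dual_obj C l a x b y f \<le> dual_obj C l a x b y \<theta>"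
    and feas: "in_box \<alpha> \<beta> (idx l) f" and i: "i \<in> idx l" and C: "C > 0"
  shows "f i > \<alpha> \<Longrightarrow> C * (ZT l a x f \<bullet> zrow a x i) - ybar b y i \<le> 0"
    and "f i < \<beta> \<Longrightarrow> C * (ZT l a x f \<bullet> zrow a x i) - ybar b y i \<ge> 0"
proof -
  let ?h = "C * (ZT l a x f \<bullet> zrow a x i) - ybar b y i"
  let ?q = "(norm (zrow a x i))\<^sup>2"
  assume A: "f i > \<alpha>"
  show "?h \<le> 0"
  proof (rule small_t[of "C/2" ?q "f i - \<alpha>"])
    fix t :: real assume t: "0 < t" "t \<le> f i - \<alpha>"
    have "in_box \<alpha> \<beta> (idx l) (f(i := f i + - t))"
      using feas t unfolding in_box_def by auto
    hence "dual_obj C l a x b y f \<le> dual_obj C l a x b y (f(i := f i + - t))" using opt by blast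
    thus "0 \<le> - t * ?h + C/2 * t\<^sup>2 * ?q" unfolding dual_upd[OF i] by simp
  qed (use C A in auto)
next
  let ?h = "C * (ZT l a x f \<bullet> zrow a x i) - ybar b y i"
  let ?q = "(norm (zrow a x i))\<^sup>2"
  assume A: "f i < \<beta>"
  have "?h \<le> 0 \<Longrightarrow> False \<or> True" by simp
  have "- (- ?h) \<ge> 0"
  proof -
    have "- ?h \<le> 0"
    proof (rule small_t[of "C/2" ?q "\<beta> - f i"])
      fix t :: real assume t: "0 < t" "t \<le> \<beta> - f i"
      have "in_box \<alpha> \<beta> (idx l) (f(i := f i + t))"
        using feas t unfolding in_box_def by auto
      hence "dual_obj C l a x b y f \<le> dual_obj C l a x b y (f(i := f i + t))" using opt by blast
      thus "0 \<le> - t * - ?h + C/2 * t\<^sup>2 * ?q" unfolding dual_upd[OF i] by (simp add: algebra_simps)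
    qed (use C A in auto)
    thus ?thesis by simp
  qed
  thus "?h \<ge> 0" by simp
qed

theorem lemma3:
  fixes l :: nat and x :: "nat \<Rightarrow> real^'n" and y a b :: "nat \<Rightarrow> real"
    and C \<alpha> \<beta> :: real and \<phi> :: "real \<Rightarrow> real"
    and wstar :: "real^'n" and \<theta>star :: "nat \<Rightarrow> real"
    and Rh Lh :: "nat set"
  assumes C_pos: "C > 0"
    and phi_nonneg: "\<forall>t. \<phi> t \<ge> 0"
    and phi_cont: "continuous_on UNIV \<phi>"
    and phi_sublin: "sublinear \<phi>"
    and phi_nonconst: "\<exists>s t. \<phi> s \<noteq> \<phi> t"
    and ab: "\<alpha> < \<beta>"
    and phi_conj: "\<forall>s. conjugate \<phi> s = (if \<alpha> \<le> s \<and> s \<le> \<beta> then 0 else \<infinity>)"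
    and w_opt: "\<forall>w. primal_obj C \<phi> l a x b y wstar \<le> primal_obj C \<phi> l a x b y w"
    and th_feas: "in_box \<alpha> \<beta> (idx l) \<theta>star"
    and th_opt: "\<forall>\<theta>. in_box \<alpha> \<beta> (idx l) \<theta> \<longrightarrow>
                    dual_obj C l a x b y \<theta>star \<le> dual_obj C l a x b y \<theta>"
    and w_th: "wstar = - C *\<^sub>R ZT l a x \<theta>star"
    and Rh_sub: "Rh \<subseteq> Rset l a x b y wstar"
    and Lh_sub: "Lh \<subseteq> Lset l a x b y wstar"
  shows "(\<forall>i\<in>Rh. \<theta>star i = \<alpha>) \<and> (\<forall>i\<in>Lh. \<theta>star i = \<beta>)
    \<and> (in_box \<alpha> \<beta> (idx l - (Rh \<union> Lh)) \<theta>star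
       \<and> (\<forall>th. in_box \<alpha> \<beta> (idx l - (Rh \<union> Lh)) th \<longrightarrow>
            reduced_obj C l a x b y (Rh \<union> Lh) \<theta>star \<theta>star
              \<le> reduced_obj C l a x b y (Rh \<union> Lh) \<theta>star th))
    \<and> (\<forall>th. (in_box \<alpha> \<beta> (idx l - (Rh \<union> Lh)) th \<and>
            (\<forall>th'. in_box \<alpha> \<beta> (idx l - (Rh \<union> Lh)) th' \<longrightarrow>
               reduced_obj C l a x b y (Rh \<union> Lh) \<theta>star th
                 \<le> reduced_obj C l a x b y (Rh \<union> Lh) \<theta>star th'))
         \<longrightarrow> (\<forall>\<theta>. in_box \<alpha> \<beta> (idx l) \<theta> \<longrightarrow>
               dual_obj C l a x b y (\<lambda>i. if i \<in> Rh \<union> Lh then \<theta>star i else th i)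
                 \<le> dual_obj C l a x b y \<theta>))"
  proof -
  have fin: "finite (idx l)" by (simp add: idx_def)
  let ?h = "\<lambda>i. C * (ZT l a x \<theta>star \<bullet> zrow a x i) - ybar b y i"
  have hw: "\<And>i. ?h i = - (wstar \<bullet> zrow a x i) - ybar b y i"
    unfolding w_th by (simp add: inner_minus_left)
  have P1: "\<forall>i\<in>Rh. \<theta>star i = \<alpha>"
  proof
    fix i assume "i \<in> Rh"
    hence i: "i \<in> idx l" and g: "- (wstar \<bullet> zrow a x i) > ybar b y i"
      using Rh_sub unfolding Rset_def by auto
    have "\<not> \<theta>star i > \<alpha>" using box_side(1)[OF th_opt th_feas i C_pos] hw[of i] g by force
    thus "\<theta>star i = \<alpha>" using th_feas i unfolding in_box_def by force
  qed
  have P2: "\<forall>i\<in>Lh. \<theta>star i = \<beta>"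
  proof
    fix i assume "i \<in> Lh"
    hence i: "i \<in> idx l" and g: "- (wstar \<bullet> zrow a x i) < ybar b y i"
      using Lh_sub unfolding Lset_def by auto
    have "\<not> \<theta>star i < \<beta>" using box_side(2)[OF th_opt th_feas i C_pos] hw[of i] g by force
    thus "\<theta>star i = \<beta>" using th_feas i unfolding in_box_def by force
  qed
  define S where "S = Rh \<union> Lh"
  have S: "S \<subseteq> idx l" using Rh_sub Lh_sub unfolding S_def Rset_def Lset_def by auto
  define K where "K = (\<lambda>f. C/2 * (\<Sum>i\<in>S. \<Sum>j\<in>S. f i * G a x i j * f j) - (\<Sum>i\<in>S. ybar b y i * f i))"
  define cmb where "cmb = (\<lambda>th i. if i \<in> S then \<theta>star i else th i)"
  have Kc: "K (cmb th) = K \<theta>star" for th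
  proof -
    have "(\<Sum>i\<in>S. \<Sum>j\<in>S. cmb th i * G a x i j * cmb th j) = (\<Sum>i\<in>S. \<Sum>j\<in>S. \<theta>star i * G a x i j * \<theta>star j)"
      by (intro sum.cong refl) (simp add: cmb_def)
    moreover have "(\<Sum>i\<in>S. ybar b y i * cmb th i) = (\<Sum>i\<in>S. ybar b y i * \<theta>star i)"
      by (intro sum.cong refl) (simp add: cmb_def)
    ultimately show ?thesis unfolding K_def by simp
  qed
  have Rc: "reduced_obj C l a x b y S (cmb th) (cmb th) = reduced_obj C l a x b y S \<theta>star th" for th
  proof -
    have R1: "(\<Sum>i\<in>idx l - S. \<Sum>j\<in>idx l - S. cmb th i * G a x i j * cmb th j) = (\<Sum>i\<in>idx l - S. \<Sum>j\<in>idx l - S. th i * G a x i j * th j)"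
      by (intro sum.cong refl) (simp add: cmb_def)
    have R2: "yhat C l a x b y S (cmb th) i = yhat C l a x b y S \<theta>star i" for i
    proof -
      have "(\<Sum>j\<in>S. G a x i j * cmb th j) = (\<Sum>j\<in>S. G a x i j * \<theta>star j)"
        by (intro sum.cong refl) (simp add: cmb_def)
      thus ?thesis unfolding yhat_def by simp
    qed
    have R3: "(\<Sum>i\<in>idx l - S. yhat C l a x b y S (cmb th) i * cmb th i) = (\<Sum>i\<in>idx l - S. yhat C l a x b y S \<theta>star i * th i)"
      by (intro sum.cong refl) (simp only: R2, simp add: cmb_def)
    show ?thesis unfolding reduced_obj_def R1 R3 ..
  qed
  have D: "dual_obj C l a x b y (cmb th) = reduced_obj C l a x b y S \<theta>star th + K \<theta>star" for th
  proof -
    have "dual_obj C l a x b y (cmb th) = reduced_obj C l a x b y S (cmb th) (cmb th) + K (cmb th)"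
      unfolding K_def by (rule dual_split[OF S])
    thus ?thesis by (simp only: Kc Rc)
  qed
  have Dstar: "dual_obj C l a x b y \<theta>star = reduced_obj C l a x b y S \<theta>star \<theta>star + K \<theta>star"
    unfolding K_def by (rule dual_split[OF S])
  have feasS: "in_box \<alpha> \<beta> (idx l - S) \<theta>star" using th_feas unfolding in_box_def by auto
  have cfeas: "\<And>th. in_box \<alpha> \<beta> (idx l - S) th \<Longrightarrow> in_box \<alpha> \<beta> (idx l) (cmb th)"
    using th_feas unfolding in_box_def cmb_def by auto
  have P3: "\<forall>th. in_box \<alpha> \<beta> (idx l - S) th \<longrightarrow>
            reduced_obj C l a x b y S \<theta>star \<theta>star \<le> reduced_obj C l a x b y S \<theta>star th"
  proof (intro allI impI)
    fix th assume "in_box \<alpha> \<beta> (idx l - S) th"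
    hence "dual_obj C l a x b y \<theta>star \<le> dual_obj C l a x b y (cmb th)" using th_opt cfeas by blast
    thus "reduced_obj C l a x b y S \<theta>star \<theta>star \<le> reduced_obj C l a x b y S \<theta>star th"
      using D Dstar by simp
  qed
  have P4: "\<forall>th. (in_box \<alpha> \<beta> (idx l - S) th \<and>
            (\<forall>th'. in_box \<alpha> \<beta> (idx l - S) th' \<longrightarrow>
               reduced_obj C l a x b y S \<theta>star th \<le> reduced_obj C l a x b y S \<theta>star th'))
         \<longrightarrow> (\<forall>\<theta>. in_box \<alpha> \<beta> (idx l) \<theta> \<longrightarrow> dual_obj C l a x b y (cmb th) \<le> dual_obj C l a x b y \<theta>)"
  proof (intro allI impI)
    fix th \<theta> assume A: "in_box \<alpha> \<beta> (idx l - S) th \<and>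
            (\<forall>th'. in_box \<alpha> \<beta> (idx l - S) th' \<longrightarrow>
               reduced_obj C l a x b y S \<theta>star th \<le> reduced_obj C l a x b y S \<theta>star th')"
      and T: "in_box \<alpha> \<beta> (idx l) \<theta>"
    have "reduced_obj C l a x b y S \<theta>star th \<le> reduced_obj C l a x b y S \<theta>star \<theta>star"
      using A feasS by blast
    hence "dual_obj C l a x b y (cmb th) \<le> dual_obj C l a x b y \<theta>star" using D Dstar by simp
    also have "\<dots> \<le> dual_obj C l a x b y \<theta>" using th_opt T by blast
    finally show "dual_obj C l a x b y (cmb th) \<le> dual_obj C l a x b y \<theta>" .
  qed
  show ?thesis using P1 P2 feasS P3 P4 unfolding S_def cmb_def by blast
qed

end
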